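(* Let $p$ be a prime, $q=p^m$, and $f:\mathbb{F}_q\to\mathbb{F}_p$ a function with $f(0)=0$ and $f(ax)=f(x)$ for all $a\in\mathbb{F}_p^*$, $x\in\mathbb{F}_q$. Let $I=f(\mathbb{F}_q^* )$. Then the partition $P=\{D^*_{f,i}\}_{i\in I}$ of $\mathbb{F}_q^*$ induces an $|I|$-class association scheme $(\mathbb{F}_q,\{R_i\}_{i\in I})$ if and only if $|I|=|\{W_f(\beta):\beta\in\mathbb{F}_q^*\}|$.
   Context: $\mathrm{Tr}$ is the absolute trace $\mathbb{F}_q\to\mathbb{F}_p$, $\zeta_p=e^{2\pi\sqrt{-1}/p}$, $W_f(\beta)=\sum_{x\in\mathbb{F}_q}\zeta_p^{f(x)-\mathrm{Tr}(\beta x)}$. For $i\in\mathbb{F}_p$, $D_{f,i}=\{x\in\mathbb{F}_q:f(x)=i\}$, $D^*_{f,i}=D_{f,i}\setminus\{0\}$, $I=\{f(x):x\ne0\}$. Relations on $\mathbb{F}_q$: the diagonal $R_{-1}$ and, for $i\in I$, $(\alpha,\beta)\in R_i$ iff $\alpha-\beta\in D^*_{f,i}$. The partition induces an $|I|$-class association scheme if these relations form a symmetric association scheme on $\mathbb{F}_q$ (each relation symmetric, and for any three relations $R_a,R_b,R_c$ the number $|\{w:(u,w)\in R_a,(w,v)\in R_b\}|$ is constant over $(u,v)\in R_c$). *)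

theory Defs
  imports "HOL-Analysis.Analysis"
begin

definition prime_subfield :: "'a::field set" where
  "prime_subfield = {of_nat k | k. k < CHAR('a)}"

definition fp_rep :: "'a::field \<Rightarrow> nat" where
  "fp_rep c = (THE k. k < CHAR('a) \<and> of_nat k = c)"

definition abs_trace :: "nat \<Rightarrow> 'a::field \<Rightarrow> 'a" where
  "abs_trace m x = (\<Sum>i<m. x ^ (CHAR('a) ^ i))"

definition zeta :: "nat \<Rightarrow> complex" where
  "zeta p = cis (2 * pi / real p)"

definition walsh :: "nat \<Rightarrow> ('a::{finite,field} \<Rightarrow> 'a) \<Rightarrow> 'a \<Rightarrow> complex" where
  "walsh m f \<beta> = (\<Sum>x\<in>UNIV. zeta CHAR('a) ^ fp_rep (f x - abs_trace m (\<beta> * x)))"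

definition sym_assoc_scheme :: "'a set \<Rightarrow> 'i set \<Rightarrow> ('i \<Rightarrow> ('a \<times> 'a) set) \<Rightarrow> bool" where
  "sym_assoc_scheme X J R \<longleftrightarrow>
     finite X \<and>
     (\<forall>j\<in>J. R j \<noteq> {} \<and> R j \<subseteq> X \<times> X \<and> (\<forall>x y. (x, y) \<in> R j \<longrightarrow> (y, x) \<in> R j)) \<and>
     (\<forall>j\<in>J. \<forall>k\<in>J. j \<noteq> k \<longrightarrow> R j \<inter> R k = {}) \<and>
     (\<Union>j\<in>J. R j) = X \<times> X \<and>
     (\<exists>j0\<in>J. R j0 = Id_on X) \<and>
     (\<forall>a\<in>J. \<forall>b\<in>J. \<forall>c\<in>J. \<exists>n. \<forall>u v. (u, v) \<in> R c \<longrightarrow>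
          card {w \<in> X. (u, w) \<in> R a \<and> (w, v) \<in> R b} = n)"

text \<open>D^*_{f,i} and the relations: None is the diagonal R_{-1}, Some i is R_i.\<close>
definition Dstar :: "('a::field \<Rightarrow> 'a) \<Rightarrow> 'a \<Rightarrow> 'a set" where
  "Dstar f i = {x. f x = i \<and> x \<noteq> 0}"

definition rel_of :: "('a::field \<Rightarrow> 'a) \<Rightarrow> 'a option \<Rightarrow> ('a \<times> 'a) set" where
  "rel_of f j = (case j of None \<Rightarrow> Id
                 | Some i \<Rightarrow> {(\<alpha>, \<beta>). \<alpha> - \<beta> \<in> Dstar f i})"

end

theory Submission
  imports Defs "HOL-Computational_Algebra.Computational_Algebra" "HOL-Library.Function_Algebras"
begin


definition iev :: "int poly \<Rightarrow> complex \<Rightarrow> complex" where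
  "iev P x = poly (map_poly of_int P) x"

lemma map_poly_of_int_add: "map_poly (of_int::int\<Rightarrow>'b::ring_1) (P + Q) = map_poly of_int P + map_poly of_int Q"
  by (intro poly_eqI) (simp add: coeff_map_poly)

lemma map_poly_of_int_mult: "map_poly (of_int::int\<Rightarrow>'b::comm_ring_1) (P * Q) = map_poly of_int P * map_poly of_int Q"
  by (intro poly_eqI) (simp add: coeff_map_poly coeff_mult)

lemma iev_add [simp]: "iev (P + Q) x = iev P x + iev Q x"
  by (simp add: iev_def map_poly_of_int_add)

lemma iev_mult [simp]: "iev (P * Q) x = iev P x * iev Q x"
  by (simp add: iev_def map_poly_of_int_mult)

lemma iev_smult [simp]: "iev (smult a P) x = of_int a * iev P x"
  by (simp add: iev_def map_poly_smult)

lemma iev_const [simp]: "iev [:a:] x = of_int a"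
  by (simp add: iev_def map_poly_pCons)

lemma iev_lin [simp]: "iev [:a,b:] x = of_int a + of_int b * x"
  by (simp add: iev_def map_poly_pCons)

lemma iev_uminus [simp]: "iev (- P) x = - iev P x"
proof -
  have "- P = smult (-1) P" by simp
  then show ?thesis by (simp del: smult_minus_left)
qed

lemma iev_pcompose: "iev (P \<circ>\<^sub>p [:1,1:]) x = iev P (x + 1)"
proof (induction P)
  case 0
  then show ?case by (simp add: iev_def)
next
  case (pCons a P)
  have "iev (pCons a P \<circ>\<^sub>p [:1,1:]) x = iev ([:a:] + [:1,1:] * (P \<circ>\<^sub>p [:1,1:])) x"
    by (simp add: pcompose_pCons)
  also have "\<dots> = of_int a + (1 + x) * iev P (x+1)"
    using pCons by (simp only: iev_add iev_mult iev_const iev_lin) simp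
  also have "\<dots> = iev (pCons a P) (x + 1)"
    by (simp add: iev_def map_poly_pCons algebra_simps)
  finally show ?case .
qed

lemma iev_altdef:
  assumes "degree P < N"
  shows "iev P x = (\<Sum>i<N. of_int (coeff P i) * x ^ i)"
proof -
  have "iev P x = (\<Sum>i\<le>degree (map_poly (of_int::int\<Rightarrow>complex) P). coeff (map_poly of_int P) i * x ^ i)"
    unfolding iev_def by (rule poly_altdef)
  also have "\<dots> = (\<Sum>i<N. coeff (map_poly (of_int::int\<Rightarrow>complex) P) i * x ^ i)"
  proof (rule sum.mono_neutral_left)
    show "{..degree (map_poly (of_int::int\<Rightarrow>complex) P)} \<subseteq> {..<N}"
    proof -
      have "degree (map_poly (of_int::int\<Rightarrow>complex) P) \<le> degree P"
        by (rule degree_le) (auto simp: coeff_map_poly coeff_eq_0)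
      then show ?thesis using assms by auto
    qed
    show "\<forall>i\<in>{..<N} - {..degree (map_poly (of_int::int\<Rightarrow>complex) P)}. coeff (map_poly (of_int::int\<Rightarrow>complex) P) i * x ^ i = 0"
      by (auto simp: coeff_eq_0)
  qed auto
  finally show ?thesis by (simp add: coeff_map_poly)
qed

definition Psi :: "nat \<Rightarrow> int poly" where
  "Psi p = (\<Sum>j<p. monom (int (p choose Suc j)) j)"

lemma coeff_Psi: "coeff (Psi p) i = (if i < p then int (p choose Suc i) else 0)"
  by (simp add: Psi_def coeff_sum coeff_monom)

lemma degree_Psi: assumes "p > 0" shows "degree (Psi p) = p - 1"
proof (rule antisym)
  show "degree (Psi p) \<le> p - 1"
    by (rule degree_le) (auto simp: coeff_Psi)
  show "p - 1 \<le> degree (Psi p)"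
    by (rule le_degree) (use assms in \<open>simp add: coeff_Psi\<close>)
qed

lemma lead_coeff_Psi: assumes "p > 0" shows "lead_coeff (Psi p) = 1"
  using assms by (simp add: degree_Psi coeff_Psi)

lemma Psi_nonzero: assumes "p > 0" shows "Psi p \<noteq> 0"
  using lead_coeff_Psi[OF assms] by auto

lemma content_Psi: assumes "p > 0" shows "content (Psi p) = 1"
proof -
  have "content (Psi p) dvd 1"
    using content_dvd_coeff[of "Psi p" "degree (Psi p)"] lead_coeff_Psi[OF assms] by simp
  then show ?thesis
    using is_unit_content_iff by blast
qed

lemma Psi_root:
  assumes "p > 0" "(w + 1) ^ p = (1::complex)" "w \<noteq> 0"
  shows "iev (Psi p) w = 0"
proof -
  obtain n where n: "p = Suc n" using assms(1) by (cases p) auto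
  have "iev (Psi p) w = (\<Sum>i<p. of_int (coeff (Psi p) i) * w ^ i)"
    by (rule iev_altdef) (use assms(1) degree_Psi[OF assms(1)] in auto)
  also have "\<dots> = (\<Sum>i<p. of_nat (p choose Suc i) * w ^ i)"
    by (simp add: coeff_Psi)
  finally have e: "iev (Psi p) w = (\<Sum>i<p. of_nat (p choose Suc i) * w ^ i)" .
  have "(w + 1) ^ p = (\<Sum>k\<le>p. of_nat (p choose k) * w ^ k * 1 ^ (p - k))"
    by (rule binomial_ring)
  also have "\<dots> = 1 + (\<Sum>k\<le>n. of_nat (p choose Suc k) * w ^ Suc k)"
    unfolding n by (subst sum.atMost_Suc_shift) simp
  also have "(\<Sum>k\<le>n. of_nat (p choose Suc k) * w ^ Suc k) = w * iev (Psi p) w"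
    unfolding e unfolding n lessThan_Suc_atMost sum_distrib_left
    by (rule sum.cong) (auto simp: mult_ac simp del: binomial_Suc_Suc)
  finally have "w * iev (Psi p) w = 0" using assms(2) by simp
  then show ?thesis using assms(3) by simp
qed

lemma Psi_eisenstein:
  assumes p: "prime p" and eq: "Psi p = G * H"
  shows "degree G = 0 \<or> degree H = 0"
proof (rule ccontr)
  assume "\<not> (degree G = 0 \<or> degree H = 0)"
  then have dG: "degree G > 0" and dH: "degree H > 0" by auto
  have p0: "p > 0" using p prime_gt_0_nat by blast
  have G0: "G \<noteq> 0" and H0: "H \<noteq> 0" using dG dH by auto
  have dsum: "degree G + degree H = p - 1"
    using eq degree_mult_eq[OF G0 H0] degree_Psi[OF p0] by simp
  have lc: "lead_coeff G * lead_coeff H = 1"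
    using eq lead_coeff_mult[of G H] lead_coeff_Psi[OF p0] by simp
  have pi: "prime (int p)" using p by simp
  have ndl: "\<not> int p dvd lead_coeff G" "\<not> int p dvd lead_coeff H"
  proof -
    show "\<not> int p dvd lead_coeff G"
    proof
      assume "int p dvd lead_coeff G"
      then have "int p dvd 1" using lc by (metis dvd_mult2)
      then show False using pi by (simp add: prime_int_iff)
    qed
    show "\<not> int p dvd lead_coeff H"
    proof
      assume "int p dvd lead_coeff H"
      then have "int p dvd 1" using lc by (metis dvd_mult)
      then show False using pi by (simp add: prime_int_iff)
    qed
  qed
  define i0 where "i0 = (LEAST i. \<not> int p dvd coeff G i)"
  define j0 where "j0 = (LEAST j. \<not> int p dvd coeff H j)"
  have i0: "\<not> int p dvd coeff G i0" "i0 \<le> degree G"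
  proof -
    show "\<not> int p dvd coeff G i0" unfolding i0_def
      by (rule LeastI[of _ "degree G"]) (use ndl(1) in simp)
    show "i0 \<le> degree G" unfolding i0_def
      by (rule Least_le) (use ndl(1) in simp)
  qed
  have j0: "\<not> int p dvd coeff H j0" "j0 \<le> degree H"
  proof -
    show "\<not> int p dvd coeff H j0" unfolding j0_def
      by (rule LeastI[of _ "degree H"]) (use ndl(2) in simp)
    show "j0 \<le> degree H" unfolding j0_def
      by (rule Least_le) (use ndl(2) in simp)
  qed
  have bi: "int p dvd coeff G i" if "i < i0" for i
    using that not_less_Least unfolding i0_def by blast
  have bj: "int p dvd coeff H j" if "j < j0" for j
    using that not_less_Least unfolding j0_def by blast
  have psi_dvd: "int p dvd coeff (Psi p) i" if "i \<noteq> p - 1" for i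
  proof (cases "i < p")
    case True
    then have "Suc i < p" using that by auto
    then have "p dvd (p choose Suc i)"
      using p by (intro dvd_choose_prime) auto
    then show ?thesis using True by (simp add: coeff_Psi)
  qed (simp add: coeff_Psi)
  let ?n = "i0 + j0"
  have cm: "coeff (G * H) ?n = (\<Sum>i\<le>?n. coeff G i * coeff H (?n - i))"
    by (rule coeff_mult)
  also have "\<dots> = coeff G i0 * coeff H (?n - i0) + (\<Sum>i\<in>{..?n} - {i0}. coeff G i * coeff H (?n - i))"
    by (subst sum.remove[of _ i0]) auto
  finally have cm2: "coeff (G * H) ?n = coeff G i0 * coeff H j0 + (\<Sum>i\<in>{..?n} - {i0}. coeff G i * coeff H (?n - i))"
    by simp
  have rest: "int p dvd (\<Sum>i\<in>{..?n} - {i0}. coeff G i * coeff H (?n - i))"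
  proof (rule dvd_sum)
    fix i assume "i \<in> {..?n} - {i0}"
    then have "i < i0 \<or> (i > i0 \<and> ?n - i < j0)" by auto
    then show "int p dvd coeff G i * coeff H (?n - i)"
      using bi bj by (meson dvd_mult dvd_mult2)
  qed
  have "\<not> int p dvd coeff G i0 * coeff H j0"
    using i0(1) j0(1) pi by (simp add: prime_dvd_mult_iff)
  then have "\<not> int p dvd coeff (G * H) ?n"
    using cm2 rest by (metis dvd_add_left_iff)
  then have "?n = p - 1" using psi_dvd eq by metis
  then have "i0 = degree G" "j0 = degree H" using dsum i0(2) j0(2) by auto
  then have "int p dvd coeff G 0" "int p dvd coeff H 0" using bi bj dG dH by auto
  then have "int p * int p dvd coeff G 0 * coeff H 0" by (rule mult_dvd_mono)
  also have "coeff G 0 * coeff H 0 = int p"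
  proof -
    have "coeff G 0 * coeff H 0 = coeff (G * H) 0" by (simp add: coeff_mult_0)
    also have "\<dots> = coeff (Psi p) 0" using eq by simp
    also have "\<dots> = int p" using p0 by (simp add: coeff_Psi)
    finally show ?thesis .
  qed
  finally have "int p * int p dvd int p * 1" by simp
  then have "int p dvd 1" using p0 by (subst (asm) dvd_mult_cancel_left) auto
  then show False using pi by (simp add: prime_int_iff)
qed

lemma Psi_min_degree:
  assumes p: "prime p" and w: "iev (Psi p) w = 0" and G: "G \<noteq> 0" "iev G w = 0"
  shows "degree G \<ge> p - 1"
proof (rule ccontr)
  assume "\<not> degree G \<ge> p - 1"
  then have dG: "degree G < p - 1" by simp
  have p0: "p > 0" using p prime_gt_0_nat by blast
  define d where "d = (LEAST d. \<exists>G. G \<noteq> 0 \<and> iev G w = 0 \<and> degree G = d)"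
  have ex: "\<exists>G1. G1 \<noteq> 0 \<and> iev G1 w = 0 \<and> degree G1 = d"
    unfolding d_def by (rule LeastI[of _ "degree G"]) (use G in auto)
  then obtain G1 where G1: "G1 \<noteq> 0" "iev G1 w = 0" "degree G1 = d" by blast
  have min: "d \<le> degree G'" if "G' \<noteq> 0" "iev G' w = 0" for G'
    unfolding d_def by (rule Least_le) (use that in auto)
  have dlt: "d < p - 1" using min[OF G] dG by simp
  define G0 where "G0 = primitive_part G1"
  have G0: "G0 \<noteq> 0" "degree G0 = d" "content G0 = 1"
    using G1 by (auto simp: G0_def content_primitive_part)
  have "iev G1 w = of_int (content G1) * iev G0 w"
    unfolding G0_def by (metis content_times_primitive_part iev_smult)
  moreover have "content G1 \<noteq> 0" using G1 by simp
  ultimately have G0w: "iev G0 w = 0" using G1 by simp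
  define R where "R = pseudo_mod (Psi p) G0"
  obtain a Q where aQ: "a \<noteq> 0" "smult a (Psi p) = G0 * Q + R"
    using pseudo_mod(1)[OF G0(1), of "Psi p"] unfolding R_def by blast
  have "iev R w = 0"
  proof -
    have "iev (smult a (Psi p)) w = iev (G0 * Q + R) w" using aQ by simp
    then show ?thesis using w G0w by simp
  qed
  have R0: "R = 0"
  proof (rule ccontr)
    assume "R \<noteq> 0"
    then have "degree R < degree G0" using pseudo_mod(2)[OF G0(1), of "Psi p"] unfolding R_def by auto
    with min[OF \<open>R \<noteq> 0\<close> \<open>iev R w = 0\<close>] G0 show False by simp
  qed
  have eq1: "smult a (Psi p) = G0 * Q" using aQ R0 by simp
  have "content (smult a (Psi p)) = content (G0 * Q)" using eq1 by simp
  then have cQ: "content Q = \<bar>a\<bar>"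
    using G0(3) content_Psi[OF p0] by (simp add: content_mult)
  define Q1 where "Q1 = primitive_part Q"
  have "Q = smult \<bar>a\<bar> Q1" unfolding Q1_def by (metis cQ content_times_primitive_part)
  then have "smult a (Psi p) = smult \<bar>a\<bar> (G0 * Q1)" using eq1 by (simp add: mult_smult_right)
  also have "\<dots> = smult a (smult (sgn a) (G0 * Q1))"
    by (simp add: abs_sgn mult.commute)
  finally have "Psi p = smult (sgn a) (G0 * Q1)" using aQ(1) by (rule smult_cancel[rotated])
  then have eq: "Psi p = G0 * smult (sgn a) Q1" by (simp add: mult_smult_right)
  from Psi_eisenstein[OF p eq] show False
  proof
    assume "degree G0 = 0"
    then obtain c where "G0 = [:c:]" by (metis degree_eq_zeroE)
    then show False using G0(1) G0w by simp
  next
    assume H: "degree (smult (sgn a) Q1) = 0"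
    have "smult (sgn a) Q1 \<noteq> 0" using eq Psi_nonzero[OF p0] by auto
    then have "degree (Psi p) = degree G0"
      using eq H G0(1) by (simp add: degree_mult_eq)
    then show False using degree_Psi[OF p0] G0(2) dlt by simp
  qed
qed


lemma zeta_pow_p: assumes "p > 0" shows "zeta p ^ p = 1"
  unfolding zeta_def Complex.DeMoivre using assms by simp

lemma zeta_pow_ne1:
  assumes "0 < k" "k < p" shows "zeta p ^ k \<noteq> 1"
proof
  assume "zeta p ^ k = 1"
  then have "cis (real k * (2 * pi / real p)) = 1" unfolding zeta_def Complex.DeMoivre .
  then have "cos (real k * (2 * pi / real p)) = 1"
    by (metis Re_complex_of_real complex_Re_numeral cis.sel(1) one_complex.sel(1))
  then obtain x :: int where x: "real k * (2 * pi / real p) = real_of_int x * 2 * pi"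
    using cos_one_2pi_int by blast
  have "real k = real_of_int x * real p" using x assms by (simp add: field_simps)
  then have "int k = x * int p" by (metis of_int_eq_iff of_int_mult of_int_of_nat_eq)
  then show False using assms
    by (metis dvd_triv_right int_dvd_int_iff nat_dvd_not_less)
qed

lemma zeta_ne1: assumes "p > 1" shows "zeta p \<noteq> 1"
  using zeta_pow_ne1[of 1 p] assms by simp

lemma sum_zeta_pow: assumes "p > 1" shows "(\<Sum>k<p. zeta p ^ k) = 0"
proof -
  have "zeta p ^ p - 1 = (zeta p - 1) * (\<Sum>k<p. zeta p ^ k)" by (rule power_diff_1_eq)
  then show ?thesis using zeta_pow_p[of p] zeta_ne1[OF assms] assms by simp
qed

lemma zeta_indep:
  assumes p: "prime p" and s: "(\<Sum>k<p. of_int (z k) * zeta p ^ k) = 0"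
  shows "\<forall>k<p. z k = z (p - 1)"
proof -
  have p1: "p > 1" using p prime_gt_1_nat by blast
  define C where "C = (\<Sum>k<p-1. monom (z k - z (p-1)) k)"
  have cC: "coeff C k = (if k < p - 1 then z k - z (p-1) else 0)" for k
    by (simp add: C_def coeff_sum coeff_monom)
  have dC: "degree C < p - 1"
    by (rule degree_lessI) (use p1 in \<open>auto simp: cC\<close>)
  have "iev C (zeta p) = (\<Sum>k<p-1. of_int (coeff C k) * zeta p ^ k)"
    by (rule iev_altdef[OF dC])
  also have "\<dots> = (\<Sum>k<p-1. of_int (z k - z (p-1)) * zeta p ^ k)"
    by (simp add: cC)
  also have "\<dots> = (\<Sum>k<p. of_int (z k - z (p-1)) * zeta p ^ k)"
  proof -
    have "p = Suc (p - 1)" using p1 by simp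
    then have "(\<Sum>k<p. of_int (z k - z (p-1)) * zeta p ^ k) = (\<Sum>k<Suc (p-1). of_int (z k - z (p-1)) * zeta p ^ k)"
      by simp
    also have "\<dots> = (\<Sum>k<p-1. of_int (z k - z (p-1)) * zeta p ^ k)"
      by (subst sum.lessThan_Suc) simp
    finally show ?thesis by simp
  qed
  also have "\<dots> = (\<Sum>k<p. of_int (z k) * zeta p ^ k) - of_int (z (p-1)) * (\<Sum>k<p. zeta p ^ k)"
    by (simp add: algebra_simps sum_subtractf sum_distrib_left sum_distrib_right)
  also have "\<dots> = 0" using s sum_zeta_pow[OF p1] by simp
  finally have C0: "iev C (zeta p) = 0" .
  have "C = 0"
  proof (rule ccontr)
    assume "C \<noteq> 0"
    define C' where "C' = C \<circ>\<^sub>p [:1,1:]"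
    have "C' \<noteq> 0" using \<open>C \<noteq> 0\<close> unfolding C'_def by (subst pcompose_eq_0_iff) auto
    moreover have "iev C' (zeta p - 1) = 0" unfolding C'_def by (simp add: iev_pcompose C0)
    moreover have "iev (Psi p) (zeta p - 1) = 0"
      by (rule Psi_root) (use p1 zeta_pow_p[of p] zeta_ne1[OF p1] in auto)
    ultimately have "degree C' \<ge> p - 1" using Psi_min_degree[OF p] by blast
    moreover have "degree C' = degree C" unfolding C'_def by (simp add: degree_pcompose)
    ultimately show False using dC by simp
  qed
  then show ?thesis using cC by (metis coeff_0 diff_eq_diff_eq diff_self linorder_neqE_nat not_less_eq
       One_nat_def Suc_pred p1 less_imp_le_nat le_neq_implies_less not_less zero_less_diff)
qed



lemma field_pow_card:
  fixes x :: "'a::{finite,field}"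
  shows "x ^ CARD('a) = x"
proof (cases "x = 0")
  case False
  have "x * (\<Prod>y\<in>UNIV-{0}. x * y) = x * x ^ (card (UNIV :: 'a set) - 1) * \<Prod>(UNIV-{0})"
    by (simp add: prod.distrib mult_ac)
  also have "x * x ^ (card (UNIV :: 'a set) - 1) = x ^ Suc (card (UNIV :: 'a set) - 1)"
    by (subst power_Suc) auto
  also have "Suc (card (UNIV :: 'a set) - 1) = card (UNIV :: 'a set)"
    using finite_UNIV_card_ge_0[where ?'a = 'a] by simp
  also have "(\<Prod>y\<in>UNIV-{0}. x * y) = (\<Prod>y\<in>UNIV-{0}. y)"
    by (rule prod.reindex_bij_witness[of _ "\<lambda>y. y / x" "\<lambda>y. x * y"]) (use False in auto)
  finally show ?thesis
    by simp
qed (use finite_UNIV_card_ge_0[where ?'a = 'a] in auto)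

locale ffsetup =
  fixes f :: "'a::{finite,field} \<Rightarrow> 'a" and p m :: nat
  assumes prime_p: "prime p" and char: "CHAR('a) = p" and card: "CARD('a) = p ^ m"
    and f_in: "\<forall>x. f x \<in> prime_subfield"
    and f0: "f 0 = 0"
    and f_inv: "\<forall>k x. 0 < k \<and> k < p \<longrightarrow> f (of_nat k * x) = f x"
begin

lemma p_gt1: "p > 1" using prime_p prime_gt_1_nat by blast
lemma p_pos: "p > 0" using p_gt1 by simp
lemma primeCHAR: "prime CHAR('a)" using prime_p char by simp

lemma m_pos: "m > 0"
proof (rule ccontr)
  assume "\<not> m > 0"
  then have "CARD('a) = 1" using card by simp
  moreover have "CARD('a) \<ge> 2"
  proof -
    have "{0::'a, 1} \<subseteq> UNIV" by simp
    then have "card {0::'a, 1} \<le> CARD('a)" by (intro card_mono) auto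
    then show ?thesis by simp
  qed
  ultimately show False by simp
qed

lemma of_nat_p: "(of_nat p :: 'a) = 0"
  using char by (metis of_nat_CHAR)

lemma of_nat_mod: "(of_nat (k mod p) :: 'a) = of_nat k"
proof -
  have "(of_nat k :: 'a) = of_nat (p * (k div p) + k mod p)" by simp
  also have "\<dots> = of_nat p * of_nat (k div p) + of_nat (k mod p)" by (simp only: of_nat_add of_nat_mult)
  finally show ?thesis using of_nat_p by simp
qed

lemma of_nat_inj_lt:
  assumes "a < p" "b < p" "(of_nat a :: 'a) = of_nat b" shows "a = b"
proof -
  have *: "x = y" if "x \<le> y" "y < p" "(of_nat x :: 'a) = of_nat y" for x y
  proof -
    have "(of_nat y :: 'a) = of_nat x + of_nat (y - x)" using that(1) by (simp flip: of_nat_add)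
    then have "(of_nat (y - x) :: 'a) = 0" using that(3) by simp
    then have "p dvd (y - x)" using char of_nat_eq_0_iff_char_dvd by metis
    moreover have "y - x < p" using that by simp
    ultimately have "y - x = 0" using nat_dvd_not_less by (cases "y - x = 0") auto
    then show ?thesis using that(1) by simp
  qed
  show ?thesis
  proof (cases "a \<le> b")
    case True then show ?thesis using * assms by blast
  next
    case False then show ?thesis using *[of b a] assms by simp
  qed
qed

lemma of_nat_eq_iff: "(of_nat k :: 'a) = of_nat k' \<longleftrightarrow> k mod p = k' mod p"
proof
  assume "(of_nat k :: 'a) = of_nat k'"
  then have "(of_nat (k mod p) :: 'a) = of_nat (k' mod p)" by (simp only: of_nat_mod)
  then show "k mod p = k' mod p" by (rule of_nat_inj_lt[rotated 2]) (use p_pos in auto)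
next
  assume "k mod p = k' mod p"
  then have "(of_nat (k mod p) :: 'a) = of_nat (k' mod p)" by simp
  then show "(of_nat k :: 'a) = of_nat k'" by (simp only: of_nat_mod)
qed

lemma psf_iff: "(c::'a) \<in> prime_subfield \<longleftrightarrow> (\<exists>k. (of_nat k :: 'a) = c)"
proof
  assume "c \<in> prime_subfield" then show "\<exists>k. (of_nat k :: 'a) = c"
    unfolding prime_subfield_def by auto
next
  assume "\<exists>k. (of_nat k :: 'a) = c"
  then obtain k where "(of_nat k :: 'a) = c" by blast
  then have "of_nat (k mod p) = c" "k mod p < p" using of_nat_mod p_pos by auto
  then show "c \<in> prime_subfield" unfolding prime_subfield_def using char by blast
qed

lemma psf_of_nat [simp]: "(of_nat k :: 'a) \<in> prime_subfield"
  using psf_iff by blast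

lemma fp_rep: assumes "(c::'a) \<in> prime_subfield"
  shows "fp_rep c < p" "of_nat (fp_rep c) = c"
proof -
  have "c \<in> {of_nat k | k. k < CHAR('a)}" using assms by (simp add: prime_subfield_def)
  then obtain k where k0: "k < CHAR('a)" "(of_nat k :: 'a) = c" by blast
  then have k: "k < p" "(of_nat k :: 'a) = c" using char by simp_all
  have uniq: "k' = k" if "k' < p \<and> (of_nat k' :: 'a) = c" for k'
  proof -
    have "k' mod p = k mod p" using that k of_nat_eq_iff[of k' k] by simp
    then show ?thesis using that k by simp
  qed
  have "(THE k. k < CHAR('a) \<and> (of_nat k :: 'a) = c) = k"
    by (rule the_equality) (use k0 uniq char in blast)+
  then have "fp_rep c = k" unfolding fp_rep_def .
  then show "fp_rep c < p" "of_nat (fp_rep c) = c" using k by auto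
qed

lemma fp_rep_of_nat: "fp_rep (of_nat k :: 'a) = k mod p"
proof -
  have "fp_rep (of_nat k :: 'a) < p" "of_nat (fp_rep (of_nat k :: 'a)) = (of_nat k :: 'a)"
    using fp_rep[OF psf_of_nat[of k]] by auto
  then show ?thesis using of_nat_eq_iff by simp
qed

lemma psf_add: assumes "(a::'a) \<in> prime_subfield" "(b::'a) \<in> prime_subfield" shows "a + b \<in> prime_subfield"
proof -
  obtain ka kb where "(of_nat ka :: 'a) = a" "(of_nat kb :: 'a) = b" using assms psf_iff by meson
  then have "(of_nat (ka + kb) :: 'a) = a + b" by simp
  then show ?thesis using psf_iff by blast
qed

lemma psf_mult: assumes "(a::'a) \<in> prime_subfield" "(b::'a) \<in> prime_subfield" shows "a * b \<in> prime_subfield"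
proof -
  obtain ka kb where "(of_nat ka :: 'a) = a" "(of_nat kb :: 'a) = b" using assms psf_iff by meson
  then have "(of_nat (ka * kb) :: 'a) = a * b" by simp
  then show ?thesis using psf_iff by blast
qed

lemma psf_uminus: assumes "(a::'a) \<in> prime_subfield" shows "- a \<in> prime_subfield"
proof -
  obtain k where k: "k < p" "(of_nat k :: 'a) = a" using fp_rep[OF assms] by blast
  have "(of_nat (p - k) :: 'a) = of_nat p - of_nat k" using k by (simp add: of_nat_diff)
  then show ?thesis using k of_nat_p psf_iff by (metis diff_0)
qed

lemma frob: "((x::'a) + y) ^ (p ^ i) = x ^ (p ^ i) + y ^ (p ^ i)"
  using freshmans_dream'[OF primeCHAR, of "p ^ i" i x y] char by simp

lemma tr_add: "abs_trace m (x + y) = abs_trace m x + abs_trace m (y :: 'a)"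
  unfolding abs_trace_def char by (simp add: frob sum.distrib)

lemma tr_zero [simp]: "abs_trace m (0 :: 'a) = 0"
  unfolding abs_trace_def using p_pos by (simp add: char zero_power)

lemma tr_of_nat_mult: "abs_trace m (of_nat k * x) = of_nat k * abs_trace m (x :: 'a)"
proof (induction k)
  case (Suc k)
  have "abs_trace m (of_nat (Suc k) * x) = abs_trace m (x + of_nat k * x)"
    by (simp add: distrib_right)
  also have "\<dots> = abs_trace m x + of_nat k * abs_trace m x" by (simp only: tr_add Suc)
  finally show ?case by (simp add: distrib_right)
qed simp

lemma pow_q: "(x :: 'a) ^ (p ^ m) = x"
  using field_pow_card[of x] card by simp

lemma of_nat_pow_p: "(of_nat k :: 'a) ^ p = of_nat k"
proof (induction k)
  case (Suc k)
  have "(of_nat (Suc k) :: 'a) ^ p = (of_nat k + 1) ^ p" by (metis add.commute of_nat_Suc)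
  also have "\<dots> = of_nat k ^ p + 1 ^ p"
    using freshmans_dream[OF primeCHAR, of p "of_nat k" 1] char by simp
  finally show ?case using Suc by (simp add: add.commute)
qed (use p_pos in simp)

lemma card_psf: "card (prime_subfield :: 'a set) = p"
proof -
  have "prime_subfield = (of_nat :: nat \<Rightarrow> 'a) ` {..<p}"
    unfolding prime_subfield_def char by auto
  moreover have "inj_on (of_nat :: nat \<Rightarrow> 'a) {..<p}"
    by (auto simp: inj_on_def of_nat_eq_iff)
  then have "card ((of_nat :: nat \<Rightarrow> 'a) ` {..<p}) = card {..<p}" by (rule card_image)
  ultimately show ?thesis by simp
qed

lemma pow_p_imp_psf:
  assumes "(y :: 'a) ^ p = y" shows "y \<in> prime_subfield"
proof (rule ccontr)
  assume ny: "y \<notin> prime_subfield"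
  define P :: "'a poly" where "P = monom 1 p - [:0, 1:]"
  have cP: "coeff P p = 1" using p_gt1 by (simp add: P_def coeff_monom coeff_pCons split: nat.split)
  then have P0: "P \<noteq> 0" by auto
  have dP: "degree P \<le> p"
    unfolding P_def by (rule degree_le) (use p_gt1 in \<open>auto simp: coeff_monom coeff_pCons split: nat.split\<close>)
  have roots: "poly P z = 0 \<longleftrightarrow> z ^ p = z" for z
    by (simp add: P_def poly_monom)
  have "insert y prime_subfield \<subseteq> {z. poly P z = 0}"
    using assms by (auto simp: roots psf_iff of_nat_pow_p)
  then have "card (insert y (prime_subfield :: 'a set)) \<le> card {z. poly P z = 0}"
    by (intro card_mono) auto
  also have "\<dots> \<le> degree P" by (rule card_poly_roots_bound[OF P0])
  finally show False using ny card_psf dP by simp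
qed

lemma tr_in: "abs_trace m (x :: 'a) \<in> prime_subfield"
proof (rule pow_p_imp_psf)
  define g where "g i = x ^ (p ^ i)" for i
  have "abs_trace m x ^ p = (\<Sum>i<m. (x ^ (p ^ i)) ^ p)"
    unfolding abs_trace_def char by (rule freshmans_dream_sum[OF primeCHAR char[symmetric]])
  also have "\<dots> = (\<Sum>i<m. g (Suc i))" by (simp add: g_def power_mult[symmetric] mult.commute)
  also have "\<dots> = (\<Sum>i<m. g i)"
  proof -
    have "(\<Sum>i<Suc m. g i) = g 0 + (\<Sum>i<m. g (Suc i))" by (rule sum.lessThan_Suc_shift)
    moreover have "(\<Sum>i<Suc m. g i) = (\<Sum>i<m. g i) + g m" by simp
    moreover have "g 0 = g m" by (simp add: g_def pow_q)
    ultimately show ?thesis by simp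
  qed
  finally show "abs_trace m x ^ p = abs_trace m x" by (simp add: g_def abs_trace_def char)
qed

lemma tr_nonzero: "\<exists>x :: 'a. abs_trace m x \<noteq> 0"
proof (rule ccontr)
  assume "\<not> (\<exists>x :: 'a. abs_trace m x \<noteq> 0)"
  then have all0: "abs_trace m x = 0" for x :: 'a by blast
  define T :: "'a poly" where "T = (\<Sum>i<m. monom 1 (p ^ i))"
  have pT: "poly T x = abs_trace m x" for x
    by (simp add: T_def abs_trace_def char poly_sum poly_monom)
  have cT: "coeff T k = (\<Sum>i<m. if p ^ i = k then 1 else 0)" for k
    by (simp add: T_def coeff_sum coeff_monom)
  have inj: "p ^ i = p ^ j \<longleftrightarrow> i = j" for i j using p_gt1 by (simp add: power_inject_exp)
  have "coeff T (p ^ (m - 1)) = (\<Sum>i<m. if i = m - 1 then 1 else 0)"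
    unfolding cT by (rule sum.cong) (auto simp: inj)
  also have "\<dots> = 1" using m_pos by simp
  finally have T0: "T \<noteq> 0" by auto
  have dT: "degree T \<le> p ^ (m - 1)"
  proof (rule degree_le, intro allI impI)
    fix k assume k: "p ^ (m - 1) < k"
    have "p ^ i \<noteq> k" if "i < m" for i
    proof -
      have "p ^ i \<le> p ^ (m - 1)" using that p_gt1 by (intro power_increasing) auto
      then show ?thesis using k by simp
    qed
    then show "coeff T k = 0" unfolding cT by (intro sum.neutral) auto
  qed
  have "card (UNIV :: 'a set) \<le> card {z. poly T z = 0}"
    using all0 by (intro card_mono) (auto simp: pT)
  also have "\<dots> \<le> degree T" by (rule card_poly_roots_bound[OF T0])
  also have "\<dots> \<le> p ^ (m - 1)" by (rule dT)
  also have "\<dots> < p ^ m" using p_gt1 m_pos by (intro power_strict_increasing) auto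
  finally show False using card by simp
qed


definition e :: "'a \<Rightarrow> complex" where "e c = zeta p ^ fp_rep c"
definition chi :: "'a \<Rightarrow> 'a \<Rightarrow> complex" where "chi b x = e (abs_trace m (b * x))"

lemma zeta_pow_mod: "zeta p ^ k = zeta p ^ (k mod p)"
proof -
  have "zeta p ^ k = zeta p ^ (p * (k div p) + k mod p)" by simp
  also have "\<dots> = (zeta p ^ p) ^ (k div p) * zeta p ^ (k mod p)" by (simp only: power_add power_mult)
  finally show ?thesis using zeta_pow_p[OF p_pos] by simp
qed

lemma e_of_nat: "e (of_nat k) = zeta p ^ k"
  unfolding e_def fp_rep_of_nat by (simp flip: zeta_pow_mod)

lemma e_add: assumes "a \<in> prime_subfield" "b \<in> prime_subfield" shows "e (a + b) = e a * e b"
proof -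
  have "a + b = of_nat (fp_rep a + fp_rep b)" using fp_rep(2)[OF assms(1)] fp_rep(2)[OF assms(2)] by simp
  then have "e (a + b) = zeta p ^ (fp_rep a + fp_rep b)" by (simp only: e_of_nat)
  then show ?thesis by (simp add: e_def power_add)
qed

lemma e_zero [simp]: "e 0 = 1"
  using e_of_nat[of 0] by simp

lemma e_ne1: assumes "c \<in> prime_subfield" "c \<noteq> 0" shows "e c \<noteq> 1"
proof -
  have "fp_rep c \<noteq> 0"
  proof
    assume "fp_rep c = 0"
    then have "c = of_nat 0" using fp_rep(2)[OF assms(1)] by simp
    then show False using assms(2) by simp
  qed
  then show ?thesis unfolding e_def using zeta_pow_ne1 fp_rep(1)[OF assms(1)] by simp
qed

lemma chi_add: "chi b (x + y) = chi b x * chi b y"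
  unfolding chi_def by (simp add: distrib_left tr_add e_add tr_in)

lemma chi_zero_right [simp]: "chi b 0 = 1" by (simp add: chi_def)
lemma chi_zero_left [simp]: "chi 0 x = 1" by (simp add: chi_def)
lemma chi_comm: "chi b x = chi x b" by (simp add: chi_def mult.commute)

lemma chi_diff: "chi b y * chi b (- x) = chi b (y - x)"
  using chi_add[of b y "- x"] by simp

lemma chi_sum: "(\<Sum>x\<in>UNIV. chi b x) = (if b = 0 then of_nat CARD('a) else 0)"
proof (cases "b = 0")
  case False
  obtain x1 :: 'a where x1: "abs_trace m x1 \<noteq> 0" using tr_nonzero by blast
  define x0 where "x0 = x1 / b"
  have "chi b x0 = e (abs_trace m x1)" using False by (simp add: chi_def x0_def)
  then have c1: "chi b x0 \<noteq> 1" using e_ne1[OF tr_in x1] by simp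
  have "(\<Sum>x\<in>UNIV. chi b x) = (\<Sum>x\<in>UNIV. chi b (x + x0))"
    by (rule sum.reindex_bij_witness[of _ "\<lambda>x. x + x0" "\<lambda>x. x - x0"]) auto
  also have "\<dots> = chi b x0 * (\<Sum>x\<in>UNIV. chi b x)"
    by (simp add: chi_add sum_distrib_left mult.commute)
  finally have "(1 - chi b x0) * (\<Sum>x\<in>UNIV. chi b x) = 0" by (simp add: algebra_simps)
  then show ?thesis using c1 False by simp
qed simp

lemma chi_sum2: "(\<Sum>b\<in>UNIV. chi b x) = (if x = 0 then of_nat CARD('a) else 0)"
  using chi_sum[of x] by (simp add: chi_comm)

lemma inversion:
  "(\<Sum>b\<in>UNIV. (\<Sum>y\<in>UNIV. g y * chi b y) * chi b (- x)) = of_nat CARD('a) * g x"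
proof -
  have "(\<Sum>b\<in>UNIV. (\<Sum>y\<in>UNIV. g y * chi b y) * chi b (- x))
      = (\<Sum>b\<in>UNIV. \<Sum>y\<in>UNIV. g y * chi b (y - x))"
    by (simp add: sum_distrib_right mult.assoc chi_diff)
  also have "\<dots> = (\<Sum>y\<in>UNIV. g y * (\<Sum>b\<in>UNIV. chi b (y - x)))"
    by (subst sum.swap) (simp add: sum_distrib_left)
  also have "\<dots> = (\<Sum>y\<in>UNIV. if y = x then g y * of_nat CARD('a) else 0)"
    by (rule sum.cong) (auto simp: chi_sum2)
  also have "\<dots> = of_nat CARD('a) * g x" by simp
  finally show ?thesis .
qed

lemma inversion_set:
  "(\<Sum>b\<in>UNIV. (\<Sum>y\<in>D. chi b y) * chi b (- x)) = (if x \<in> D then of_nat CARD('a) else 0)"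
proof -
  have "(\<Sum>y\<in>D. chi b y) = (\<Sum>y\<in>UNIV. (if y \<in> D then 1 else 0) * chi b y)" for b
  proof -
    have "(\<Sum>y\<in>UNIV. (if y \<in> D then 1 else 0) * chi b y) = (\<Sum>y\<in>UNIV. if y \<in> D then chi b y else 0)"
      by (rule sum.cong) auto
    also have "\<dots> = sum (chi b) (UNIV \<inter> D)" by (rule sum.inter_restrict[symmetric]) simp
    finally show ?thesis by simp
  qed
  then show ?thesis using inversion[of "\<lambda>y. if y \<in> D then 1 else 0" x] by simp
qed


definition Iset :: "'a set" where "Iset = f ` (UNIV - {0})"
definition J :: "'a option set" where "J = insert None (Some ` Iset)"
definition P :: "'a option \<Rightarrow> 'a set" where
  "P j = (case j of None \<Rightarrow> {0} | Some i \<Rightarrow> Dstar f i)"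
definition jof :: "'a \<Rightarrow> 'a option" where "jof x = (if x = 0 then None else Some (f x))"

lemma finite_J: "finite J" unfolding J_def by simp

lemma card_J: "card J = card Iset + 1"
  unfolding J_def by (simp add: card_image)

lemma in_P_iff: "x \<in> P j \<longleftrightarrow> j = jof x"
  by (cases j) (auto simp: P_def jof_def Dstar_def)

lemma jof_in_J: "jof x \<in> J"
  by (auto simp: jof_def J_def Iset_def)

lemma P_nonempty: assumes "j \<in> J" shows "P j \<noteq> {}"
  using assms by (auto simp: J_def Iset_def P_def Dstar_def)

lemma rel_of_P: "rel_of f j = {(a, b). a - b \<in> P j}"
  by (cases j) (auto simp: rel_of_def P_def)

lemma of_nat_pm1: "(of_nat (p - 1) :: 'a) = - 1"
proof -
  have "(of_nat (p - 1) :: 'a) + 1 = of_nat p" using p_pos by (simp add: of_nat_diff)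
  then show ?thesis using of_nat_p by (simp add: eq_neg_iff_add_eq_0)
qed

lemma f_uminus: "f (- x) = f x"
proof -
  have "0 < p - 1 \<and> p - 1 < p" using p_gt1 by simp
  then have "f (of_nat (p - 1) * x) = f x" using f_inv by blast
  then show ?thesis by (metis of_nat_pm1 mult_minus1)
qed

lemma jof_uminus: "jof (- x) = jof x"
  by (simp add: jof_def f_uminus)

definition cv :: "'a option \<Rightarrow> 'a option \<Rightarrow> 'a \<Rightarrow> nat" where
  "cv a b t = card {w. t - w \<in> P a \<and> w \<in> P b}"

lemma count_eq:
  "card {w \<in> UNIV. (u, w) \<in> rel_of f a \<and> (w, v) \<in> rel_of f b} = cv a b (u - v)"
proof -
  have "{w \<in> UNIV. (u, w) \<in> rel_of f a \<and> (w, v) \<in> rel_of f b}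
      = (\<lambda>w. w + v) ` {w. (u - v) - w \<in> P a \<and> w \<in> P b}"
  proof (rule set_eqI)
    fix w
    show "w \<in> {w \<in> UNIV. (u, w) \<in> rel_of f a \<and> (w, v) \<in> rel_of f b} \<longleftrightarrow>
          w \<in> (\<lambda>w. w + v) ` {w. (u - v) - w \<in> P a \<and> w \<in> P b}"
      by (auto simp: rel_of_P image_iff algebra_simps intro!: exI[of _ "w - v"])
  qed
  moreover have "inj (\<lambda>w::'a. w + v)" by (auto simp: inj_def)
  ultimately show ?thesis unfolding cv_def by (simp add: card_image inj_on_def)
qed

lemma scheme_iff:
  "sym_assoc_scheme (UNIV :: 'a set) J (rel_of f) \<longleftrightarrow>
   (\<forall>a\<in>J. \<forall>b\<in>J. \<forall>c\<in>J. \<exists>n. \<forall>t\<in>P c. cv a b t = n)"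
proof -
  have b1: "finite (UNIV :: 'a set)" by simp
  have b2: "\<forall>j\<in>J. rel_of f j \<noteq> {} \<and> rel_of f j \<subseteq> UNIV \<times> UNIV \<and> (\<forall>x y. (x, y) \<in> rel_of f j \<longrightarrow> (y, x) \<in> rel_of f j)"
  proof (intro ballI conjI allI impI)
    fix j :: "'a option" assume "j \<in> J"
    then obtain x where "x \<in> P j" using P_nonempty by blast
    then have "(x, 0) \<in> rel_of f j" by (simp add: rel_of_P)
    then show "rel_of f j \<noteq> {}" by blast
  next
    fix j :: "'a option" show "rel_of f j \<subseteq> UNIV \<times> UNIV" by simp
  next
    fix j :: "'a option" and x y :: 'a assume "(x, y) \<in> rel_of f j"
    then have "jof (x - y) = j" by (simp add: rel_of_P in_P_iff)
    moreover have "y - x = - (x - y)" by simp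
    ultimately have "jof (y - x) = j" by (metis jof_uminus)
    then show "(y, x) \<in> rel_of f j" by (simp add: rel_of_P in_P_iff)
  qed
  have b3: "\<forall>j\<in>J. \<forall>k\<in>J. j \<noteq> k \<longrightarrow> rel_of f j \<inter> rel_of f k = {}"
    by (auto simp: rel_of_P in_P_iff)
  have b4: "(\<Union>j\<in>J. rel_of f j) = UNIV \<times> UNIV"
    using jof_in_J by (auto simp: rel_of_P in_P_iff)
  have b5: "\<exists>j0\<in>J. rel_of f j0 = Id_on UNIV"
    by (rule bexI[of _ None]) (auto simp: J_def rel_of_def Id_on_def)
  have cnt: "(\<exists>n. \<forall>u v. (u, v) \<in> rel_of f c \<longrightarrow>
          card {w \<in> UNIV. (u, w) \<in> rel_of f a \<and> (w, v) \<in> rel_of f b} = n)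
        \<longleftrightarrow> (\<exists>n. \<forall>t\<in>P c. cv a b t = n)" for a b c
  proof
    assume "\<exists>n. \<forall>u v. (u, v) \<in> rel_of f c \<longrightarrow>
          card {w \<in> UNIV. (u, w) \<in> rel_of f a \<and> (w, v) \<in> rel_of f b} = n"
    then obtain n where n: "\<And>u v. (u, v) \<in> rel_of f c \<Longrightarrow>
          card {w \<in> UNIV. (u, w) \<in> rel_of f a \<and> (w, v) \<in> rel_of f b} = n" by blast
    have "cv a b t = n" if "t \<in> P c" for t
      using n[of t 0] that by (simp add: cv_def rel_of_P)
    then show "\<exists>n. \<forall>t\<in>P c. cv a b t = n" by blast
  next
    assume "\<exists>n. \<forall>t\<in>P c. cv a b t = n"
    then obtain n where n: "\<And>t. t \<in> P c \<Longrightarrow> cv a b t = n" by blast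
    show "\<exists>n. \<forall>u v. (u, v) \<in> rel_of f c \<longrightarrow>
          card {w \<in> UNIV. (u, w) \<in> rel_of f a \<and> (w, v) \<in> rel_of f b} = n"
    proof (intro exI[of _ n] allI impI)
      fix u v assume "(u, v) \<in> rel_of f c"
      then have "u - v \<in> P c" by (simp add: rel_of_P)
      then show "card {w \<in> UNIV. (u, w) \<in> rel_of f a \<and> (w, v) \<in> rel_of f b} = n"
        by (simp only: count_eq n)
    qed
  qed
  show ?thesis
    by (simp only: sym_assoc_scheme_def b1[THEN eqTrueI] b2[THEN eqTrueI] b3[THEN eqTrueI]
        b4[THEN eqTrueI] b5[THEN eqTrueI] cnt simp_thms)
qed

definition h :: "'a option \<Rightarrow> 'a \<Rightarrow> complex" where "h j g = (\<Sum>x\<in>P j. chi g x)"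

lemma h_None: "h None g = 1" by (simp add: h_def P_def)

lemma cv_fourier:
  "(\<Sum>t\<in>UNIV. of_nat (cv a b t) * chi g t) = h a g * h b g"
proof -
  have "of_nat (cv a b t) = (\<Sum>w\<in>P b. if t - w \<in> P a then 1 else (0::complex))" for t
  proof -
    have "{w. t - w \<in> P a \<and> w \<in> P b} = {w \<in> P b. t - w \<in> P a}" by auto
    then have "of_nat (cv a b t) = (\<Sum>w\<in>{w \<in> P b. t - w \<in> P a}. (1::complex))"
      unfolding cv_def by simp
    also have "\<dots> = (\<Sum>w\<in>P b. if t - w \<in> P a then 1 else (0::complex))"
      by (rule sum.inter_filter) simp
    finally show ?thesis .
  qed
  then have "(\<Sum>t\<in>UNIV. of_nat (cv a b t) * chi g t)
      = (\<Sum>t\<in>UNIV. \<Sum>w\<in>P b. if t - w \<in> P a then chi g t else 0)"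
    by (auto simp: sum_distrib_right intro!: sum.cong)
  also have "\<dots> = (\<Sum>w\<in>P b. \<Sum>t\<in>UNIV. if t - w \<in> P a then chi g t else 0)"
    by (rule sum.swap)
  also have "\<dots> = (\<Sum>w\<in>P b. \<Sum>y\<in>P a. chi g (y + w))"
  proof (rule sum.cong[OF refl])
    fix w
    have "(\<Sum>t\<in>UNIV. if t - w \<in> P a then chi g t else 0) = (\<Sum>t\<in>{t\<in>UNIV. t - w \<in> P a}. chi g t)"
      by (rule sum.inter_filter[symmetric]) simp
    also have "\<dots> = (\<Sum>y\<in>P a. chi g (y + w))"
      by (rule sum.reindex_bij_witness[of _ "\<lambda>y. y + w" "\<lambda>t. t - w"]) auto
    finally show "(\<Sum>t\<in>UNIV. if t - w \<in> P a then chi g t else 0) = (\<Sum>y\<in>P a. chi g (y + w))" .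
  qed
  also have "\<dots> = (\<Sum>y\<in>P a. \<Sum>w\<in>P b. chi g y * chi g w)"
    by (subst sum.swap) (simp add: chi_add)
  also have "\<dots> = h a g * h b g"
    by (simp add: h_def sum_product)
  finally show ?thesis .
qed

lemma h_inversion:
  "(\<Sum>g\<in>UNIV. h j g * chi g (- x)) = (if x \<in> P j then of_nat CARD('a) else 0)"
  unfolding h_def by (rule inversion_set)


definition s :: "nat \<Rightarrow> 'a \<Rightarrow> complex" where "s k g = (\<Sum>x\<in>Dstar f (of_nat k). chi g x)"

lemma f_rep: "of_nat (fp_rep (f x)) = f x" "fp_rep (f x) < p"
  using fp_rep[OF f_in[rule_format, of x]] by auto

lemma fiber_eq: assumes "k < p"
  shows "{x \<in> UNIV - {0}. fp_rep (f x) = k} = Dstar f (of_nat k)"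
proof (rule set_eqI)
  fix x
  have "fp_rep (f x) = k \<longleftrightarrow> f x = of_nat k"
  proof
    assume "fp_rep (f x) = k" then show "f x = of_nat k" using f_rep(1)[of x] by simp
  next
    assume "f x = of_nat k" then have "fp_rep (f x) = k mod p" by (simp add: fp_rep_of_nat)
    then show "fp_rep (f x) = k" using assms by simp
  qed
  then show "x \<in> {x \<in> UNIV - {0}. fp_rep (f x) = k} \<longleftrightarrow> x \<in> Dstar f (of_nat k)"
    by (auto simp: Dstar_def)
qed

lemma sum_by_level:
  "(\<Sum>x\<in>UNIV - {0}. G x) = (\<Sum>k<p. \<Sum>x\<in>Dstar f (of_nat k). G x)"
proof -
  have "(\<Sum>k<p. \<Sum>x\<in>{x \<in> UNIV - {0}. fp_rep (f x) = k}. G x) = (\<Sum>x\<in>UNIV - {0}. G x)"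
    by (rule sum.group[of "UNIV - {0}" "{..<p}" "\<lambda>x. fp_rep (f x)" G]) (auto simp: f_rep)
  moreover have "(\<Sum>k<p. \<Sum>x\<in>{x \<in> UNIV - {0}. fp_rep (f x) = k}. G x) = (\<Sum>k<p. \<Sum>x\<in>Dstar f (of_nat k). G x)"
  proof (rule sum.cong[OF refl])
    fix k assume "k \<in> {..<p}"
    then have "k < p" by simp
    show "(\<Sum>x\<in>{x \<in> UNIV - {0}. fp_rep (f x) = k}. G x) = (\<Sum>x\<in>Dstar f (of_nat k). G x)"
      by (subst fiber_eq[OF \<open>k < p\<close>]) (rule refl)
  qed
  ultimately show ?thesis by simp
qed

lemma sum_UNIV_split: "(\<Sum>x\<in>UNIV. G x) = G 0 + (\<Sum>x\<in>UNIV - {0}. G (x::'a))"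
  by (metis UNIV_I finite sum.remove)

lemma sum_s: "(\<Sum>k<p. s k g) = (\<Sum>x\<in>UNIV. chi g x) - 1"
  unfolding s_def using sum_UNIV_split[of "chi g"] sum_by_level[of "chi g"] by simp

lemma tr_uminus: "abs_trace m (- x) = - abs_trace m (x :: 'a)"
  using tr_add[of x "- x"] by (metis add.commute eq_neg_iff_add_eq_0 add.right_inverse tr_zero)

lemma walsh_formula: "walsh m f b = 1 + (\<Sum>k<p. zeta p ^ k * s k (- b))"
proof -
  have trm: "zeta CHAR('a) ^ fp_rep (f x - abs_trace m (b * x)) = e (f x) * chi (- b) x" for x
  proof -
    have "f x - abs_trace m (b * x) = f x + abs_trace m (- b * x)" by (simp add: tr_uminus)
    then have "e (f x - abs_trace m (b * x)) = e (f x) * e (abs_trace m (- b * x))"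
      using e_add[OF f_in[rule_format] tr_in, of x "- b * x"] by (simp only:)
    then show ?thesis by (simp add: e_def char chi_def)
  qed
  have "walsh m f b = (\<Sum>x\<in>UNIV. e (f x) * chi (- b) x)"
    unfolding walsh_def by (simp add: trm)
  also have "\<dots> = 1 + (\<Sum>k<p. \<Sum>x\<in>Dstar f (of_nat k). e (f x) * chi (- b) x)"
    by (subst sum_UNIV_split) (simp add: f0 sum_by_level)
  also have "(\<Sum>k<p. \<Sum>x\<in>Dstar f (of_nat k). e (f x) * chi (- b) x) = (\<Sum>k<p. zeta p ^ k * s k (- b))"
  proof (rule sum.cong[OF refl])
    fix k assume "k \<in> {..<p}"
    have "e (f x) = zeta p ^ k" if "x \<in> Dstar f (of_nat k)" for x
      using that e_of_nat[of k] by (simp add: Dstar_def)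
    then show "(\<Sum>x\<in>Dstar f (of_nat k). e (f x) * chi (- b) x) = zeta p ^ k * s k (- b)"
      by (simp add: s_def sum_distrib_left)
  qed
  finally show ?thesis .
qed

lemma sum_zeta_mult: "(\<Sum>a<p. zeta p ^ (a * r)) = (if r mod p = 0 then of_nat p else 0)"
proof (cases "r mod p = 0")
  case True
  then have "zeta p ^ (a * r) = 1" for a
    by (metis mult_0_right mod_mult_right_eq power_0 zeta_pow_mod)
  then show ?thesis using True by simp
next
  case False
  define w where "w = zeta p ^ r"
  have w1: "w \<noteq> 1" unfolding w_def using False zeta_pow_ne1[of "r mod p" p] p_pos
    by (metis zeta_pow_mod mod_less_divisor neq0_conv)
  have wp: "w ^ p = 1" unfolding w_def using zeta_pow_p[OF p_pos]
    by (metis power_mult power_one mult.commute)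
  have "w ^ p - 1 = (w - 1) * (\<Sum>a<p. w ^ a)" by (rule power_diff_1_eq)
  then have "(\<Sum>a<p. w ^ a) = 0" using w1 wp by simp
  moreover have "zeta p ^ (a * r) = w ^ a" for a unfolding w_def by (metis power_mult mult.commute)
  ultimately show ?thesis using False by simp
qed

lemma Dstar_scale:
  assumes "0 < a" "a < p"
  shows "(\<lambda>x. of_nat a * x) ` Dstar f i = Dstar f i"
proof -
  have a0: "(of_nat a :: 'a) \<noteq> 0"
  proof
    assume "(of_nat a :: 'a) = 0"
    then have "(of_nat a :: 'a) = of_nat 0" by simp
    then show False using of_nat_inj_lt[of a 0] assms by simp
  qed
  show ?thesis
  proof (rule endo_inj_surj)
    show "finite (Dstar f i)" by simp
    show "(\<lambda>x. of_nat a * x) ` Dstar f i \<subseteq> Dstar f i"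
      using a0 f_inv assms by (auto simp: Dstar_def)
    show "inj_on (\<lambda>x. of_nat a * x) (Dstar f i)"
      using a0 by (auto simp: inj_on_def)
  qed
qed

lemma chi_scale: "chi g (of_nat a * x) = zeta p ^ (a * fp_rep (abs_trace m (g * x)))"
proof -
  have "abs_trace m (g * (of_nat a * x)) = of_nat a * abs_trace m (g * x)"
    by (metis mult.left_commute tr_of_nat_mult)
  also have "\<dots> = of_nat (a * fp_rep (abs_trace m (g * x)))"
    using fp_rep(2)[OF tr_in] by simp
  finally have X: "abs_trace m (g * (of_nat a * x)) = of_nat (a * fp_rep (abs_trace m (g * x)))" .
  show ?thesis by (simp only: chi_def e_of_nat X)
qed

definition zs :: "nat \<Rightarrow> 'a \<Rightarrow> int" where
  "zs k g = (\<Sum>x\<in>Dstar f (of_nat k). if abs_trace m (g * x) = 0 then int p - 1 else - 1)"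

lemma s_rational: "of_nat (p - 1) * s k g = of_int (zs k g)"
proof -
  let ?D = "Dstar f (of_nat k)"
  have "of_nat (p - 1) * s k g = (\<Sum>a\<in>{1..<p}. s k g)" by simp
  also have "\<dots> = (\<Sum>a\<in>{1..<p}. \<Sum>x\<in>?D. chi g (of_nat a * x))"
  proof (rule sum.cong[OF refl])
    fix a assume "a \<in> {1..<p}"
    then have "(\<lambda>x. of_nat a * x) ` ?D = ?D" by (intro Dstar_scale) auto
    moreover have "inj_on (\<lambda>x. (of_nat a :: 'a) * x) ?D"
    proof -
      have "(of_nat a :: 'a) \<noteq> 0"
        using of_nat_inj_lt[of a 0] \<open>a \<in> {1..<p}\<close> by auto
      then show ?thesis by (auto simp: inj_on_def)
    qed
    ultimately show "s k g = (\<Sum>x\<in>?D. chi g (of_nat a * x))"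
      unfolding s_def by (metis (no_types, lifting) sum.reindex_cong)
  qed
  also have "\<dots> = (\<Sum>x\<in>?D. \<Sum>a\<in>{1..<p}. chi g (of_nat a * x))"
    by (rule sum.swap)
  also have "\<dots> = (\<Sum>x\<in>?D. \<Sum>a\<in>{1..<p}. zeta p ^ (a * fp_rep (abs_trace m (g * x))))"
    by (rule sum.cong[OF refl], rule sum.cong[OF refl], rule chi_scale)
  also have "\<dots> = (\<Sum>x\<in>?D. of_int (if abs_trace m (g * x) = 0 then int p - 1 else - 1))"
  proof (rule sum.cong[OF refl])
    fix x
    let ?r = "fp_rep (abs_trace m (g * x))"
    have rr: "?r < p" "of_nat ?r = abs_trace m (g * x)" using fp_rep[OF tr_in[of "g * x"]] by auto
    have r0: "?r mod p = 0 \<longleftrightarrow> abs_trace m (g * x) = 0"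
    proof
      assume "?r mod p = 0" then have "?r = 0" using rr by simp
      then show "abs_trace m (g * x) = 0" using rr(2) by simp
    next
      assume "abs_trace m (g * x) = 0"
      then have "?r = fp_rep (of_nat 0 :: 'a)" by simp
      then show "?r mod p = 0" by (simp only: fp_rep_of_nat) simp
    qed
    have "(\<Sum>a<p. zeta p ^ (a * ?r)) = zeta p ^ (0 * ?r) + (\<Sum>a\<in>{1..<p}. zeta p ^ (a * ?r))"
    proof -
      have "{..<p} = insert 0 {1..<p}" using p_pos by auto
      then show ?thesis by simp
    qed
    then have sp: "(\<Sum>a\<in>{1..<p}. zeta p ^ (a * ?r)) = (\<Sum>a<p. zeta p ^ (a * ?r)) - 1" by simp
    show "(\<Sum>a\<in>{1..<p}. zeta p ^ (a * ?r)) = of_int (if abs_trace m (g * x) = 0 then int p - 1 else - 1)"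
    proof (cases "abs_trace m (g * x) = 0")
      case True
      then show ?thesis unfolding sp sum_zeta_mult[of ?r] using r0 by simp
    next
      case False
      then show ?thesis unfolding sp sum_zeta_mult[of ?r] using r0 by simp
    qed
  qed
  also have "\<dots> = of_int (zs k g)" by (simp add: zs_def)
  finally show ?thesis .
qed


lemma W_eq_imp:
  assumes g: "g \<noteq> 0" "g' \<noteq> 0" and W: "walsh m f (- g) = walsh m f (- g')"
  shows "\<forall>k<p. s k g = s k g'"
proof -
  have eq: "(\<Sum>k<p. zeta p ^ k * s k g) = (\<Sum>k<p. zeta p ^ k * s k g')"
    using W walsh_formula[of "- g"] walsh_formula[of "- g'"] by simp
  define z where "z k = zs k g - zs k g'" for k
  have zk: "of_int (z k) = of_nat (p - 1) * (s k g - s k g')" for k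
    unfolding z_def using s_rational[of k g] s_rational[of k g'] by (simp add: algebra_simps)
  have "(\<Sum>k<p. of_int (z k) * zeta p ^ k) = (\<Sum>k<p. of_nat (p - 1) * (zeta p ^ k * s k g - zeta p ^ k * s k g'))"
    by (rule sum.cong[OF refl]) (simp only: zk algebra_simps)
  also have "\<dots> = of_nat (p - 1) * ((\<Sum>k<p. zeta p ^ k * s k g) - (\<Sum>k<p. zeta p ^ k * s k g'))"
    by (simp only: right_diff_distrib sum_subtractf sum_distrib_left)
  also have "\<dots> = 0" using eq by simp
  finally have "\<forall>k<p. z k = z (p - 1)" by (rule zeta_indep[OF prime_p])
  moreover have "(\<Sum>k<p. (of_int (z k) :: complex)) = 0"
  proof -
    have "(\<Sum>k<p. (of_int (z k) :: complex)) = of_nat (p - 1) * ((\<Sum>k<p. s k g) - (\<Sum>k<p. s k g'))"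
      by (simp only: zk right_diff_distrib sum_subtractf sum_distrib_left)
    also have "\<dots> = 0" using g by (simp add: sum_s chi_sum)
    finally show ?thesis .
  qed
  ultimately have "(\<Sum>k<p. (of_int (z (p - 1)) :: complex)) = 0"
    by (metis (no_types, lifting) lessThan_iff sum.cong)
  then have "of_nat p * (of_int (z (p - 1)) :: complex) = 0" by simp
  then have "z (p - 1) = 0" using p_pos by simp
  then have "\<forall>k<p. z k = 0" using \<open>\<forall>k<p. z k = z (p - 1)\<close> by simp
  show ?thesis
  proof (intro allI impI)
    fix k assume "k < p"
    then have "of_nat (p - 1) * (s k g - s k g') = 0" using zk[of k] \<open>\<forall>k<p. z k = 0\<close> by simp
    moreover have "(of_nat (p - 1) :: complex) \<noteq> 0" using p_gt1 by simp
    ultimately show "s k g = s k g'" by simp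
  qed
qed

definition Sv :: "'a \<Rightarrow> nat \<Rightarrow> complex" where "Sv g = (\<lambda>k. if k < p then s k g else 0)"
definition Hv :: "'a \<Rightarrow> 'a option \<Rightarrow> complex" where "Hv g = (\<lambda>j. if j \<in> J then h j g else 0)"

lemma W_eq_iff:
  assumes "g \<noteq> 0" "g' \<noteq> 0"
  shows "walsh m f (- g) = walsh m f (- g') \<longleftrightarrow> Sv g = Sv g'"
proof
  assume "walsh m f (- g) = walsh m f (- g')"
  then show "Sv g = Sv g'" using W_eq_imp[OF assms] by (auto simp: Sv_def)
next
  assume "Sv g = Sv g'"
  then have "\<forall>k<p. s k g = s k g'" by (metis Sv_def)
  then show "walsh m f (- g) = walsh m f (- g')" by (simp add: walsh_formula)
qed

lemma h_Some: assumes "i \<in> Iset" shows "h (Some i) g = s (fp_rep i) g"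
proof -
  have "i \<in> prime_subfield" using assms f_in by (auto simp: Iset_def)
  then have "of_nat (fp_rep i) = i" by (rule fp_rep)
  then show ?thesis by (simp add: h_def s_def P_def)
qed

lemma s_outside: assumes "(of_nat k :: 'a) \<notin> Iset" shows "s k g = 0"
proof -
  have "Dstar f (of_nat k) = {}"
  proof (rule ccontr)
    assume "Dstar f (of_nat k) \<noteq> {}"
    then obtain x where "x \<in> Dstar f (of_nat k)" by blast
    then have x: "x \<noteq> 0" "f x = of_nat k" by (auto simp: Dstar_def)
    have "of_nat k \<in> f ` (UNIV - {0})" by (rule image_eqI[where x = x]) (use x in auto)
    then show False using assms by (simp add: Iset_def)
  qed
  then show ?thesis by (simp add: s_def)
qed

lemma s_inside: assumes "(of_nat k :: 'a) \<in> Iset" "k < p" shows "s k g = h (Some (of_nat k)) g"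
  using h_Some[OF assms(1)] fp_rep_of_nat[of k] assms(2) by simp

lemma Sv_Hv: "Sv g = Sv g' \<longleftrightarrow> Hv g = Hv g'"
proof
  assume S: "Sv g = Sv g'"
  have "h j g = h j g'" if "j \<in> J" for j
  proof (cases j)
    case None then show ?thesis by (simp add: h_None)
  next
    case (Some i)
    then have i: "i \<in> Iset" using that by (auto simp: J_def)
    have "fp_rep i < p" using i f_in fp_rep(1) by (auto simp: Iset_def)
    then have "s (fp_rep i) g = s (fp_rep i) g'" using S by (metis Sv_def)
    then show ?thesis using Some h_Some[OF i] by simp
  qed
  then show "Hv g = Hv g'" by (auto simp: Hv_def)
next
  assume H: "Hv g = Hv g'"
  have "s k g = s k g'" if "k < p" for k
  proof (cases "(of_nat k :: 'a) \<in> Iset")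
    case True
    then have "Some (of_nat k) \<in> J" by (simp add: J_def)
    then have "h (Some (of_nat k)) g = h (Some (of_nat k)) g'" using H by (metis Hv_def)
    then show ?thesis using s_inside[OF True that] by simp
  next
    case False then show ?thesis by (simp add: s_outside)
  qed
  then show "Sv g = Sv g'" by (auto simp: Sv_def)
qed

lemma Sv_zero: assumes "g \<noteq> 0" shows "Sv g \<noteq> Sv 0"
proof
  assume "Sv g = Sv 0"
  then have "(\<Sum>k<p. s k g) = (\<Sum>k<p. s k 0)" by (metis (no_types, lifting) Sv_def lessThan_iff sum.cong)
  then have "(\<Sum>x\<in>UNIV. chi g x) = (\<Sum>x\<in>UNIV. chi 0 x)" by (simp add: sum_s)
  then show False using assms by (simp add: chi_sum)
qed

lemma card_same_kernel:
  assumes "finite A" "\<And>x y. x \<in> A \<Longrightarrow> y \<in> A \<Longrightarrow> G1 x = G1 y \<longleftrightarrow> G2 x = G2 y"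
  shows "card (G1 ` A) = card (G2 ` A)"
proof -
  define S where "S = (\<lambda>x. (G1 x, G2 x)) ` A"
  have "fst ` S = G1 ` A" "snd ` S = G2 ` A" unfolding S_def by force+
  moreover have "inj_on fst S" "inj_on snd S" unfolding S_def inj_on_def using assms(2) by auto
  ultimately show ?thesis by (metis card_image)
qed

lemma card_W: "card (walsh m f ` (UNIV - {0})) = card (Sv ` (UNIV - {0}))"
proof -
  have u: "uminus ` (UNIV - {0::'a}) = UNIV - {0}"
  proof (rule set_eqI)
    fix y :: 'a
    show "y \<in> uminus ` (UNIV - {0}) \<longleftrightarrow> y \<in> UNIV - {0}"
    proof
      assume "y \<in> UNIV - {0}" then show "y \<in> uminus ` (UNIV - {0})"
        by (intro image_eqI[of y uminus "- y"]) auto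
    qed auto
  qed
  have "walsh m f ` (UNIV - {0}) = walsh m f ` (uminus ` (UNIV - {0}))" by (simp only: u)
  also have "\<dots> = (\<lambda>g. walsh m f (- g)) ` (UNIV - {0})" by (simp add: image_image)
  finally have "walsh m f ` (UNIV - {0}) = (\<lambda>g. walsh m f (- g)) ` (UNIV - {0})" .
  also have "card \<dots> = card (Sv ` (UNIV - {0}))"
    by (rule card_same_kernel) (auto simp: W_eq_iff)
  finally show ?thesis .
qed

lemma card_Hv: "card (Hv ` UNIV) = card (walsh m f ` (UNIV - {0})) + 1"
proof -
  have "card (Hv ` UNIV) = card (Sv ` UNIV)"
    by (rule card_same_kernel) (auto simp: Sv_Hv)
  also have "Sv ` UNIV = insert (Sv 0) (Sv ` (UNIV - {0}))" by auto
  also have "card \<dots> = card (Sv ` (UNIV - {0})) + 1"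
  proof -
    have "Sv 0 \<notin> Sv ` (UNIV - {0})"
    proof
      assume "Sv 0 \<in> Sv ` (UNIV - {0})"
      then obtain g where g: "g \<noteq> 0" "Sv 0 = Sv g" by auto
      then show False using Sv_zero[of g] by simp
    qed
    then show ?thesis by (subst card_insert_disjoint) auto
  qed
  finally show ?thesis using card_W by simp
qed

end


definition fscale :: "complex \<Rightarrow> ('b \<Rightarrow> complex) \<Rightarrow> 'b \<Rightarrow> complex" where
  "fscale c v = (\<lambda>x. c * v x)"

lemma fscale_apply: "fscale c v x = c * v x" by (simp add: fscale_def)

interpretation fv: vector_space "fscale :: complex \<Rightarrow> ('b \<Rightarrow> complex) \<Rightarrow> 'b \<Rightarrow> complex"
  by unfold_locales (auto simp: fun_eq_iff algebra_simps fscale_apply)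

lemma fsum_apply: "(\<Sum>a\<in>A. F a) x = (\<Sum>a\<in>A. F a x)" for F :: "'c \<Rightarrow> 'b \<Rightarrow> complex"
  by (induction A rule: infinite_finite_induct) auto

lemma fprod_apply: "(\<Prod>a\<in>A. F a) x = (\<Prod>a\<in>A. F a x)" for F :: "'c \<Rightarrow> 'b \<Rightarrow> complex"
  by (induction A rule: infinite_finite_induct) auto

lemma subspace_mult_right: "fv.subspace {x. x * w \<in> fv.span S}"
  for w :: "'b \<Rightarrow> complex"
proof (rule fv.subspaceI)
  show "0 \<in> {x. x * w \<in> fv.span S}" using fv.span_zero by (simp add: zero_fun_def times_fun_def)
next
  fix x y assume "x \<in> {x. x * w \<in> fv.span S}" "y \<in> {x. x * w \<in> fv.span S}"
  then show "x + y \<in> {x. x * w \<in> fv.span S}" by (simp add: distrib_right fv.span_add)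
next
  fix c x assume "x \<in> {x. x * w \<in> fv.span S}"
  moreover have "fscale c x * w = fscale c (x * w)" by (simp add: fun_eq_iff fscale_apply)
  ultimately show "fscale c x \<in> {x. x * w \<in> fv.span S}" by (simp add: fv.span_scale)
qed

lemma subspace_mult_left: "fv.subspace {x. w * x \<in> fv.span S}"
  for w :: "'b \<Rightarrow> complex"
  using subspace_mult_right[of w S] by (simp add: mult.commute)

context ffsetup
begin

definition Hs :: "('a \<Rightarrow> complex) set" where "Hs = h ` J"
definition delta :: "('a option \<Rightarrow> complex) \<Rightarrow> 'a \<Rightarrow> complex" where
  "delta v = (\<lambda>g. if Hv g = v then 1 else 0)"
definition Ts :: "('a \<Rightarrow> complex) set" where "Ts = delta ` (Hv ` UNIV)"

lemma Hv_J: "j \<in> J \<Longrightarrow> Hv g j = h j g" by (simp add: Hv_def)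

lemma q_ne0: "(of_nat CARD('a) :: complex) \<noteq> 0" by simp

lemma h_inj: "inj_on h J"
proof (rule inj_onI)
  fix a b assume ab: "a \<in> J" "b \<in> J" "h a = h b"
  obtain x where x: "x \<in> P a" using P_nonempty[OF ab(1)] by blast
  have "(\<Sum>g\<in>UNIV. h b g * chi g (- x)) = of_nat CARD('a)"
    using h_inversion[of a x] x ab(3) by simp
  then have "x \<in> P b" using h_inversion[of b x] by (auto split: if_splits)
  then show "a = b" using x by (simp add: in_P_iff)
qed

lemma finite_Hs: "finite Hs" by (simp add: Hs_def finite_J)
lemma finite_Ts: "finite Ts" by (simp add: Ts_def)
lemma card_Hs: "card Hs = card J" unfolding Hs_def by (rule card_image[OF h_inj])

lemma delta_inj: "inj_on delta (Hv ` UNIV)"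
proof (rule inj_onI)
  fix v v' assume "v \<in> Hv ` UNIV" "v' \<in> Hv ` UNIV" "delta v = delta v'"
  then obtain g0 where g0: "v = Hv g0" by blast
  have "delta v g0 = 1" using g0 by (simp add: delta_def)
  then have "delta v' g0 = 1" using \<open>delta v = delta v'\<close> by simp
  then show "v = v'" using g0 by (simp add: delta_def split: if_splits)
qed

lemma card_Ts: "card Ts = card (Hv ` UNIV)" unfolding Ts_def by (rule card_image[OF delta_inj])

lemma sum_Hs: "(\<Sum>w\<in>Hs. F w) = (\<Sum>j\<in>J. F (h j))"
  unfolding Hs_def using sum.reindex[OF h_inj, of F] by (simp add: o_def)

lemma sum_partition: "(\<Sum>t\<in>UNIV. G t) = (\<Sum>c\<in>J. \<Sum>t\<in>P c. G t)"
proof -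
  have "(\<Sum>c\<in>J. sum G {t \<in> UNIV. jof t = c}) = sum G UNIV"
    by (rule sum.group[of UNIV J jof G]) (auto simp: finite_J jof_in_J)
  moreover have "{t \<in> UNIV. jof t = c} = P c" for c by (auto simp: in_P_iff)
  ultimately show ?thesis by simp
qed

lemma Hs_indep: "\<not> fv.dependent Hs"
proof (rule fv.independent_if_scalars_zero[OF finite_Hs])
  fix c :: "('a \<Rightarrow> complex) \<Rightarrow> complex" and v
  assume eq: "(\<Sum>w\<in>Hs. fscale (c w) w) = 0" and v: "v \<in> Hs"
  then obtain j0 where j0: "j0 \<in> J" "v = h j0" by (auto simp: Hs_def)
  obtain x where x: "x \<in> P j0" using P_nonempty[OF j0(1)] by blast
  have z: "(\<Sum>w\<in>Hs. c w * w g) = 0" for g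
    using fun_cong[OF eq, of g] by (simp add: fsum_apply fscale_apply)
  have "0 = (\<Sum>g\<in>UNIV. (\<Sum>w\<in>Hs. c w * w g) * chi g (- x))" by (simp add: z)
  also have "\<dots> = (\<Sum>w\<in>Hs. c w * (\<Sum>g\<in>UNIV. w g * chi g (- x)))"
    by (simp add: sum_distrib_left sum_distrib_right mult.assoc sum.swap[of _ UNIV Hs])
  also have "\<dots> = (\<Sum>j\<in>J. c (h j) * (\<Sum>g\<in>UNIV. h j g * chi g (- x)))"
    by (rule sum_Hs)
  also have "\<dots> = (\<Sum>j\<in>J. if j = j0 then c (h j) * of_nat CARD('a) else 0)"
    by (rule sum.cong[OF refl]) (use x in \<open>simp add: h_inversion in_P_iff\<close>)
  also have "\<dots> = c (h j0) * of_nat CARD('a)" using j0 by simp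
  finally show "c v = 0" using j0 by simp
qed

lemma Ts_indep: "\<not> fv.dependent Ts"
proof (rule fv.independent_if_scalars_zero[OF finite_Ts])
  fix c :: "('a \<Rightarrow> complex) \<Rightarrow> complex" and t
  assume eq: "(\<Sum>w\<in>Ts. fscale (c w) w) = 0" and t: "t \<in> Ts"
  then obtain g0 where g0: "t = delta (Hv g0)" by (auto simp: Ts_def)
  have "0 = (\<Sum>w\<in>Ts. c w * w g0)"
    using fun_cong[OF eq, of g0] by (simp add: fsum_apply fscale_apply)
  also have "\<dots> = (\<Sum>v\<in>Hv ` UNIV. c (delta v) * delta v g0)"
    unfolding Ts_def using sum.reindex[OF delta_inj, of "\<lambda>w. c w * w g0"] by (simp add: o_def)
  also have "\<dots> = (\<Sum>v\<in>Hv ` UNIV. if v = Hv g0 then c (delta v) else 0)"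
    by (rule sum.cong[OF refl]) (auto simp: delta_def)
  also have "\<dots> = c t" using g0 by simp
  finally show "c t = 0" by simp
qed

lemma in_span_Ts:
  assumes "\<And>g. F g = \<Phi> (Hv g)"
  shows "F \<in> fv.span Ts"
proof -
  have "F = (\<Sum>v\<in>Hv ` UNIV. fscale (\<Phi> v) (delta v))"
  proof (rule ext)
    fix g
    have "(\<Sum>v\<in>Hv ` UNIV. fscale (\<Phi> v) (delta v)) g = (\<Sum>v\<in>Hv ` UNIV. \<Phi> v * delta v g)"
      by (simp add: fsum_apply fscale_apply)
    also have "\<dots> = (\<Sum>v\<in>Hv ` UNIV. if v = Hv g then \<Phi> v else 0)"
      by (rule sum.cong[OF refl]) (auto simp: delta_def)
    also have "\<dots> = \<Phi> (Hv g)" by simp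
    finally have X: "(\<Sum>v\<in>Hv ` UNIV. fscale (\<Phi> v) (delta v)) g = \<Phi> (Hv g)" .
    show "F g = (\<Sum>v\<in>Hv ` UNIV. fscale (\<Phi> v) (delta v)) g" by (simp only: X assms)
  qed
  also have "\<dots> \<in> fv.span Ts"
    by (intro fv.span_sum fv.span_scale fv.span_base) (auto simp: Ts_def)
  finally show ?thesis .
qed

lemma Hs_sub_Ts: "Hs \<subseteq> fv.span Ts"
proof
  fix w assume "w \<in> Hs"
  then obtain j where j: "j \<in> J" "w = h j" by (auto simp: Hs_def)
  show "w \<in> fv.span Ts" by (rule in_span_Ts[of _ "\<lambda>v. v j"]) (simp add: j Hv_J)
qed

lemma prod_in_span_Ts: assumes "a \<in> J" "b \<in> J" shows "h a * h b \<in> fv.span Ts"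
  by (rule in_span_Ts[of _ "\<lambda>v. v a * v b"]) (simp add: assms Hv_J)

lemma card_J_le: "card J \<le> card (Hv ` UNIV)"
  using fv.independent_span_bound[OF finite_Ts Hs_indep Hs_sub_Ts] card_Hs card_Ts by simp

lemma coef:
  assumes eq: "h a * h b = (\<Sum>j\<in>J. fscale (c j) (h j))" and k: "k \<in> J" and t: "t \<in> P k"
  shows "of_nat (cv a b t) = c k"
proof -
  have "of_nat CARD('a) * of_nat (cv a b t)
      = (\<Sum>g\<in>UNIV. (\<Sum>y\<in>UNIV. of_nat (cv a b y) * chi g y) * chi g (- t))"
    by (rule inversion[symmetric])
  also have "\<dots> = (\<Sum>g\<in>UNIV. (\<Sum>j\<in>J. c j * h j g) * chi g (- t))"
  proof (rule sum.cong[OF refl])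
    fix g
    have "(\<Sum>y\<in>UNIV. of_nat (cv a b y) * chi g y) = h a g * h b g" by (rule cv_fourier)
    also have "\<dots> = (h a * h b) g" by simp
    also have "\<dots> = (\<Sum>j\<in>J. c j * h j g)" by (simp add: eq fsum_apply fscale_apply)
    finally show "(\<Sum>y\<in>UNIV. of_nat (cv a b y) * chi g y) * chi g (- t) = (\<Sum>j\<in>J. c j * h j g) * chi g (- t)"
      by simp
  qed
  also have "\<dots> = (\<Sum>j\<in>J. c j * (\<Sum>g\<in>UNIV. h j g * chi g (- t)))"
    by (simp add: sum_distrib_left sum_distrib_right mult.assoc sum.swap[of _ UNIV J])
  also have "\<dots> = (\<Sum>j\<in>J. if j = k then c j * of_nat CARD('a) else 0)"
    by (rule sum.cong[OF refl]) (use t in \<open>simp add: h_inversion in_P_iff\<close>)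
  also have "\<dots> = c k * of_nat CARD('a)" using k by simp
  finally show ?thesis by (simp add: mult.commute)
qed


lemma span_Ts_sub_Hs:
  assumes "card (Hv ` UNIV) = card J"
  shows "fv.span Ts \<subseteq> fv.span Hs"
proof
  fix a assume a: "a \<in> fv.span Ts"
  show "a \<in> fv.span Hs"
  proof (rule ccontr)
    assume na: "a \<notin> fv.span Hs"
    have ind: "\<not> fv.dependent (insert a Hs)" by (rule fv.independent_insertI[OF na Hs_indep])
    have sub: "insert a Hs \<subseteq> fv.span Ts" using a Hs_sub_Ts by auto
    have "card (insert a Hs) \<le> card Ts" using fv.independent_span_bound[OF finite_Ts ind sub] by simp
    moreover have "a \<notin> Hs" using na fv.span_base by blast
    then have "card (insert a Hs) = card Hs + 1" using finite_Hs by simp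
    ultimately show False using card_Hs card_Ts assms by simp
  qed
qed

lemma scheme_if:
  assumes "card (Hv ` UNIV) = card J"
  shows "\<forall>a\<in>J. \<forall>b\<in>J. \<forall>c\<in>J. \<exists>n. \<forall>t\<in>P c. cv a b t = n"
proof (intro ballI)
  fix a b k assume ab: "a \<in> J" "b \<in> J" and k: "k \<in> J"
  have "h a * h b \<in> fv.span Hs" using prod_in_span_Ts[OF ab] span_Ts_sub_Hs[OF assms] by blast
  then obtain u where u: "h a * h b = (\<Sum>w\<in>Hs. fscale (u w) w)"
    using fv.span_finite[OF finite_Hs] by auto
  then have eq: "h a * h b = (\<Sum>j\<in>J. fscale (u (h j)) (h j))" by (simp add: sum_Hs)
  obtain t0 where t0: "t0 \<in> P k" using P_nonempty[OF k] by blast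
  show "\<exists>n. \<forall>t\<in>P k. cv a b t = n"
  proof (rule exI[of _ "cv a b t0"], intro ballI)
    fix t assume t: "t \<in> P k"
    have "(of_nat (cv a b t) :: complex) = of_nat (cv a b t0)"
      using coef[OF eq k t] coef[OF eq k t0] by simp
    then show "cv a b t = cv a b t0" by simp
  qed
qed

lemma one_in_span: "1 \<in> fv.span Hs"
proof -
  have "h None = 1" by (simp add: fun_eq_iff h_None)
  moreover have "None \<in> J" by (simp add: J_def)
  ultimately show ?thesis by (metis Hs_def fv.span_base imageI)
qed

lemma scheme_only_if:
  assumes sch: "\<forall>a\<in>J. \<forall>b\<in>J. \<forall>c\<in>J. \<exists>n. \<forall>t\<in>P c. cv a b t = n"
  shows "card (Hv ` UNIV) \<le> card J"
proof -
  have hp: "h a * h b \<in> fv.span Hs" if ab: "a \<in> J" "b \<in> J" for a b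
  proof -
    have "\<forall>c\<in>J. \<exists>n. \<forall>t\<in>P c. cv a b t = n" using sch ab by blast
    from bchoice[OF this] obtain N where N: "\<And>c t. c \<in> J \<Longrightarrow> t \<in> P c \<Longrightarrow> cv a b t = N c" by blast
    have "h a * h b = (\<Sum>c\<in>J. fscale (of_nat (N c)) (h c))"
    proof (rule ext)
      fix g
      have "(h a * h b) g = (\<Sum>t\<in>UNIV. of_nat (cv a b t) * chi g t)" by (simp add: cv_fourier)
      also have "\<dots> = (\<Sum>c\<in>J. \<Sum>t\<in>P c. of_nat (cv a b t) * chi g t)" by (rule sum_partition)
      also have "\<dots> = (\<Sum>c\<in>J. of_nat (N c) * h c g)"
        by (rule sum.cong[OF refl]) (simp add: N h_def sum_distrib_left)
      also have "\<dots> = (\<Sum>c\<in>J. fscale (of_nat (N c)) (h c)) g" by (simp add: fsum_apply fscale_apply)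
      finally show "(h a * h b) g = (\<Sum>c\<in>J. fscale (of_nat (N c)) (h c)) g" .
    qed
    also have "\<dots> \<in> fv.span Hs"
      by (intro fv.span_sum fv.span_scale fv.span_base) (auto simp: Hs_def)
    finally show ?thesis .
  qed
  have step1: "x * w \<in> fv.span Hs" if x: "x \<in> fv.span Hs" and w: "w \<in> Hs" for x w
  proof -
    show ?thesis
    proof (rule fv.span_induct[OF x, where P = "\<lambda>x. x * w \<in> fv.span Hs"])
      show "fv.subspace {x. x * w \<in> fv.span Hs}" by (rule subspace_mult_right)
    next
      fix y assume "y \<in> Hs"
      then show "y * w \<in> fv.span Hs" using w hp by (auto simp: Hs_def)
    qed
  qed
  have mult_closed: "u * v \<in> fv.span Hs" if u: "u \<in> fv.span Hs" and v: "v \<in> fv.span Hs" for u v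
  proof -
    show ?thesis
    proof (rule fv.span_induct[OF v, where P = "\<lambda>x. u * x \<in> fv.span Hs"])
      show "fv.subspace {x. u * x \<in> fv.span Hs}" by (rule subspace_mult_left)
    next
      fix y assume "y \<in> Hs"
      then show "u * y \<in> fv.span Hs" using step1[OF u] by simp
    qed
  qed
  have prod_in: "(\<Prod>x\<in>A. F x) \<in> fv.span Hs" if "finite A" "\<And>x. x \<in> A \<Longrightarrow> F x \<in> fv.span Hs" for A F
    using that
  proof (induction A rule: finite_induct)
    case empty then show ?case using one_in_span by (simp only: prod.empty)
  next
    case (insert x A)
    then have "F x \<in> fv.span Hs" "(\<Prod>x\<in>A. F x) \<in> fv.span Hs" by auto
    then have m: "F x * (\<Prod>x\<in>A. F x) \<in> fv.span Hs" by (rule mult_closed)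
    have "(\<Prod>x\<in>insert x A. F x) = F x * (\<Prod>x\<in>A. F x)" by (rule prod.insert[OF insert(1,2)])
    then show ?case using m by (simp only:)
  qed
  have delta_in: "delta v \<in> fv.span Hs" if vin: "v \<in> Hv ` UNIV" for v
  proof -
    obtain g0 where g0: "v = Hv g0" using vin by blast
    have ex: "\<exists>j. j \<in> J \<and> h j g' \<noteq> h j g0" if ne: "Hv g' \<noteq> v" for g'
    proof -
      obtain j where "Hv g' j \<noteq> Hv g0 j" using ne g0 by (meson ext)
      then have "j \<in> J" "h j g' \<noteq> h j g0" by (auto simp: Hv_def split: if_splits)
      then show ?thesis by blast
    qed
    define jj where "jj g' = (SOME j. j \<in> J \<and> h j g' \<noteq> h j g0)" for g'
    have jj: "jj g' \<in> J" "h (jj g') g' \<noteq> h (jj g') g0" if "Hv g' \<noteq> v" for g'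
      using someI_ex[OF ex[OF that]] unfolding jj_def by auto
    define \<phi> where "\<phi> g' = fscale (1 / (h (jj g') g0 - h (jj g') g')) (h (jj g') - fscale (h (jj g') g') 1)" for g'
    define B where "B = {g'. Hv g' \<noteq> v}"
    have "\<phi> g' \<in> fv.span Hs" if "g' \<in> B" for g'
    proof -
      have "h (jj g') \<in> fv.span Hs" using jj(1) that by (auto simp: B_def Hs_def intro: fv.span_base)
      then show ?thesis unfolding \<phi>_def by (intro fv.span_scale fv.span_diff one_in_span)
    qed
    then have "(\<Prod>g'\<in>B. \<phi> g') \<in> fv.span Hs" by (intro prod_in) auto
    moreover have "(\<Prod>g'\<in>B. \<phi> g') = delta v"
    proof (rule ext)
      fix g
      show "(\<Prod>g'\<in>B. \<phi> g') g = delta v g"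
      proof (cases "Hv g = v")
        case True
        have "\<phi> g' g = 1" if "g' \<in> B" for g'
        proof -
          have "Hv g' \<noteq> v" using that by (simp add: B_def)
          then have "jj g' \<in> J" "h (jj g') g' \<noteq> h (jj g') g0" using jj by auto
          moreover have "h (jj g') g = h (jj g') g0"
            using True g0 Hv_J[OF \<open>jj g' \<in> J\<close>] by metis
          ultimately show ?thesis by (simp add: \<phi>_def fscale_apply)
        qed
        then show ?thesis using True by (simp add: fprod_apply delta_def)
      next
        case False
        then have gB: "g \<in> B" by (simp add: B_def)
        have "\<phi> g g = 0" by (simp add: \<phi>_def fscale_apply)
        then have "(\<Prod>g'\<in>B. \<phi> g' g) = 0" using gB by (intro prod_zero) auto
        then show ?thesis using False by (simp add: fprod_apply delta_def)
      qed
    qed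
    ultimately show ?thesis by simp
  qed
  have "Ts \<subseteq> fv.span Hs" using delta_in by (auto simp: Ts_def)
  then have "card Ts \<le> card Hs" using fv.independent_span_bound[OF finite_Hs Ts_indep] by simp
  then show ?thesis using card_Ts card_Hs by simp
qed

lemma main_equiv:
  "sym_assoc_scheme (UNIV :: 'a set) J (rel_of f) \<longleftrightarrow> card (Hv ` UNIV) = card J"
  using scheme_iff scheme_if scheme_only_if card_J_le by (meson le_antisym)

end

theorem corollary4p5:
  fixes f :: "'a::{finite,field} \<Rightarrow> 'a" and p m :: nat
  assumes "prime p" and "CHAR('a) = p" and "CARD('a) = p ^ m"
    and "\<forall>x. f x \<in> prime_subfield"
    and "f 0 = 0"
    and "\<forall>k x. 0 < k \<and> k < p \<longrightarrow> f (of_nat k * x) = f x"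
  shows "sym_assoc_scheme (UNIV :: 'a set) (insert None (Some ` (f ` (UNIV - {0})))) (rel_of f)
         \<longleftrightarrow> card (f ` (UNIV - {0})) = card (walsh m f ` (UNIV - {0}))"
proof -
  interpret ffsetup f p m using assms by unfold_locales
  have JJ: "insert None (Some ` (f ` (UNIV - {0}))) = J" by (simp add: J_def Iset_def)
  show ?thesis unfolding JJ main_equiv card_Hv card_J by (simp add: Iset_def eq_commute)
qed

end
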